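(* Let $f(z)=z+\sum_{k=2}^{\infty}a_kz^k$ be analytic in $\mathbb{D}=\{z:|z|<1\}$ with $zf'(z)-f(z)=\frac12 z^2\phi(z)$ for all $z\in\mathbb{D}$, where $\phi$ is analytic in $\mathbb{D}$ and $|\phi(z)|\le1$. Let $r_{\mathcal K}$ denote the positive root (in $(0,1)$) of \[(1-r)^2\ln(1-r)+2-7r+4r^2=0.\] Then for every $n\ge2$ the partial sum $s_n(z;f)=z+\sum_{k=2}^n a_kz^k$ is convex in the disk $|z|<r_{\mathcal K}$.
   Context: A function analytic in a disk is convex there if it maps the disk conformally onto a convex domain; equivalently, for normalized $g$ with $g'\neq0$, $\mathrm{Re}(1+zg''(z)/g'(z))>0$ in the disk. *)

theory Defs
  imports "HOL-Complex_Analysis.Complex_Analysis"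
begin

definition convex_in_disk :: "(complex \<Rightarrow> complex) \<Rightarrow> real \<Rightarrow> bool" where
  "convex_in_disk g r \<longleftrightarrow>
     g holomorphic_on ball 0 r \<and> inj_on g (ball 0 r) \<and> convex (g ` ball 0 r)"

definition partial_sum :: "(nat \<Rightarrow> complex) \<Rightarrow> nat \<Rightarrow> complex \<Rightarrow> complex" where
  "partial_sum a n z = z + (\<Sum>k=2..n. a k * z ^ k)"

end

theory Submission
  imports Defs
begin


lemma coef_bound:
  fixes f \<phi> :: "complex \<Rightarrow> complex" and a :: "nat \<Rightarrow> complex"
  assumes f_series: "\<And>z. z \<in> ball 0 1 \<Longrightarrow> (\<lambda>k. a k * z ^ k) sums f z"
    and f_hol: "f holomorphic_on ball 0 1"
    and phi_bd: "\<And>z. z \<in> ball 0 1 \<Longrightarrow> norm (\<phi> z) \<le> 1"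
    and eq: "\<And>z. z \<in> ball 0 1 \<Longrightarrow> z * deriv f z - f z = 1/2 * z^2 * \<phi> z"
    and k: "k \<ge> 2"
  shows "norm (a k) \<le> 1 / (2 * (real k - 1))"
proof -
  define F where "F = Abs_fps a"
  have rad: "fps_conv_radius F \<ge> 1"
    unfolding fps_conv_radius_def F_def fps_nth_Abs_fps
  proof (rule conv_radius_geI_ex')
    fix r :: real assume "0 < r" "ereal r < 1"
    hence "complex_of_real r \<in> ball 0 1" by auto
    from f_series[OF this] show "summable (\<lambda>n. a n * complex_of_real r ^ n)"
      by (rule sums_summable)
  qed
  have "f has_fps_expansion F"
    unfolding has_fps_expansion_def
  proof
    show "fps_conv_radius F > 0" by (rule less_le_trans[OF _ rad]) simp
    have "eventually (\<lambda>z. z \<in> ball 0 1) (nhds (0::complex))"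
      by (intro eventually_nhds_in_open) auto
    thus "eventually (\<lambda>z. eval_fps F z = f z) (nhds 0)"
    proof (rule eventually_mono)
      fix z :: complex assume "z \<in> ball 0 1"
      thus "eval_fps F z = f z" using f_series[of z]
        by (simp add: eval_fps_def F_def sums_iff)
    qed
  qed
  define \<psi> where "\<psi> = (\<lambda>z. z * deriv f z - f z)"
  have exp: "\<psi> has_fps_expansion fps_X * fps_deriv F - F"
    unfolding \<psi>_def
    by (intro has_fps_expansion_diff has_fps_expansion_mult has_fps_expansion_deriv
        has_fps_expansion_fps_X \<open>f has_fps_expansion F\<close>)
  have coeff: "(deriv ^^ k) \<psi> 0 / fact k = (of_nat k - 1) * a k"
  proof -
    have "(deriv ^^ k) \<psi> 0 / fact k = fps_nth (fps_X * fps_deriv F - F) k"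
      using fps_nth_fps_expansion[OF exp] by simp
    also have "\<dots> = (of_nat k - 1) * a k"
      using k by (cases k) (auto simp: F_def algebra_simps)
    finally show ?thesis .
  qed
  have hol\<psi>: "\<psi> holomorphic_on ball 0 1"
    unfolding \<psi>_def by (intro holomorphic_intros holomorphic_deriv f_hol) auto
  have bnd: "norm ((of_nat k - 1) * a k) * \<rho> ^ k \<le> 1/2 * \<rho>^2" if \<rho>: "0 < \<rho>" "\<rho> < 1" for \<rho> :: real
  proof -
    have "norm ((deriv ^^ k) \<psi> 0) \<le> fact k * (1/2 * \<rho>^2) / \<rho>^k"
    proof (rule Cauchy_inequality)
      show "\<psi> holomorphic_on ball 0 \<rho>" using hol\<psi> by (rule holomorphic_on_subset) (use \<rho> in auto)
      have "\<psi> holomorphic_on cball 0 \<rho>" using hol\<psi> by (rule holomorphic_on_subset) (use \<rho> in auto)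
      thus "continuous_on (cball 0 \<rho>) \<psi>" by (rule holomorphic_on_imp_continuous_on)
      show "0 < \<rho>" by fact
      fix x :: complex assume x: "norm (0 - x) = \<rho>"
      hence xb: "x \<in> ball 0 1" using \<rho> by auto
      have "norm (\<psi> x) = norm (1/2 * x^2 * \<phi> x)"
        using eq[OF xb] by (simp only: \<psi>_def)
      also have "\<dots> = 1/2 * norm x ^ 2 * norm (\<phi> x)"
        by (simp add: norm_mult norm_power)
      also have "\<dots> \<le> 1/2 * norm x ^ 2 * 1"
        using phi_bd[OF xb] by (intro mult_left_mono) auto
      finally show "norm (\<psi> x) \<le> 1/2 * \<rho>^2" using x by simp
    qed
    hence "norm ((deriv ^^ k) \<psi> 0 / fact k) \<le> (1/2 * \<rho>^2) / \<rho>^k"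
      by (simp add: norm_divide field_simps)
    thus ?thesis using coeff \<rho> by (simp add: field_simps)
  qed
  have km: "real k - 1 > 0" using k by simp
  have nrm: "norm ((of_nat k - 1) * a k) = (real k - 1) * norm (a k)"
  proof -
    have "(of_nat k - 1 :: complex) = of_real (real k - 1)" by simp
    thus ?thesis using km by (simp only: norm_mult norm_of_real)
  qed
  define m where "m = k - 2"
  have km2: "k = m + 2" using k m_def by simp
  have bnd2: "(real k - 1) * norm (a k) * \<rho> ^ m \<le> 1/2" if \<rho>: "0 < \<rho>" "\<rho> < 1" for \<rho> :: real
  proof -
    have "(real k - 1) * norm (a k) * \<rho> ^ m * \<rho>^2 \<le> 1/2 * \<rho>^2"
      using bnd[OF \<rho>] nrm km2 by (simp add: power_add power2_eq_square mult_ac)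
    thus ?thesis using \<rho> by simp
  qed
  have lim: "((\<lambda>\<rho>. (real k - 1) * norm (a k) * \<rho> ^ m) \<longlongrightarrow> (real k - 1) * norm (a k) * 1 ^ m) (at_left 1)"
    by (intro tendsto_intros)
  have ev: "eventually (\<lambda>\<rho>. (real k - 1) * norm (a k) * \<rho> ^ m \<le> 1/2) (at_left (1::real))"
    using eventually_at_left_real[of 0 "1::real"] by (rule eventually_mono) (use bnd2 in auto)
  have "(real k - 1) * norm (a k) * 1 ^ m \<le> 1/2"
    by (rule tendsto_upperbound[OF lim ev]) simp
  thus ?thesis using km by (simp add: field_simps)
qed


lemma rem_bound:
  fixes z w :: complex
  assumes "norm z \<le> \<rho>" "norm w \<le> \<rho>"
  shows "norm (z^(m+2) - w^(m+2) - of_nat (m+2) * w^(m+1) * (z - w))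
           \<le> real ((m+2)*(m+1)) / 2 * \<rho>^m * (norm (z-w))^2"
proof (induction m)
  case 0
  have id: "z * z - w * w - 2 * w * (z - w) = (z - w)^2" by (simp add: power2_eq_square algebra_simps)
  show ?case by (simp add: id norm_power)
next
  case (Suc m)
  have r0: "0 \<le> \<rho>" using assms(1) norm_ge_zero order_trans by blast
  have id: "z^(Suc m+2) - w^(Suc m+2) - of_nat (Suc m+2) * w^(Suc m+1) * (z - w)
     = z * (z^(m+2) - w^(m+2) - of_nat (m+2) * w^(m+1) * (z - w)) + of_nat (m+2) * w^(m+1) * (z-w)^2"
    by (simp add: power2_eq_square algebra_simps)
  have "norm (z^(Suc m+2) - w^(Suc m+2) - of_nat (Suc m+2) * w^(Suc m+1) * (z - w))
     \<le> norm z * norm (z^(m+2) - w^(m+2) - of_nat (m+2) * w^(m+1) * (z - w)) + real (m+2) * norm w^(m+1) * (norm (z-w))^2"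
    unfolding id by (rule order_trans[OF norm_triangle_ineq]) (simp only: norm_mult norm_power norm_of_nat order_refl)
  also have "\<dots> \<le> \<rho> * (real ((m+2)*(m+1)) / 2 * \<rho>^m * (norm (z-w))^2) + real (m+2) * \<rho>^(m+1) * (norm (z-w))^2"
    by (intro add_mono mult_mono Suc.IH assms power_mono mult_left_mono) (auto simp: r0)
  also have "\<dots> = real ((Suc m+2)*(Suc m+1)) / 2 * \<rho>^(Suc m) * (norm (z-w))^2"
    by (simp add: algebra_simps)
  finally show ?case .
qed

lemma re_bound:
  fixes z \<zeta> :: complex
  assumes "norm \<zeta> = \<rho>" "norm z \<le> \<rho>" "\<rho> > 0"
  shows "Re ((z - \<zeta>) / \<zeta>) \<le> - ((norm (z - \<zeta>))^2) / (2 * \<rho>^2)"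
proof -
  have n1: "(norm \<zeta>)^2 = Re \<zeta>^2 + Im \<zeta>^2" by (simp add: cmod_power2)
  have n2: "(norm z)^2 = Re z^2 + Im z^2" by (simp add: cmod_power2)
  have n3: "(norm (z-\<zeta>))^2 = (Re z - Re \<zeta>)^2 + (Im z - Im \<zeta>)^2" by (simp add: cmod_power2)
  have "(norm z)^2 \<le> \<rho>^2" using assms by (intro power_mono) auto
  hence le: "Re z^2 + Im z^2 \<le> \<rho>^2" using n2 by simp
  have rr: "Re \<zeta>^2 + Im \<zeta>^2 = \<rho>^2" using n1 assms by simp
  have "Re ((z - \<zeta>) / \<zeta>) = ((Re z - Re \<zeta>) * Re \<zeta> + (Im z - Im \<zeta>) * Im \<zeta>) / \<rho>^2"
    by (simp add: Re_divide rr)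
  also have "\<dots> \<le> (- ((Re z - Re \<zeta>)^2 + (Im z - Im \<zeta>)^2) / 2) / \<rho>^2"
  proof (rule divide_right_mono)
    show "(Re z - Re \<zeta>) * Re \<zeta> + (Im z - Im \<zeta>) * Im \<zeta> \<le> - ((Re z - Re \<zeta>)^2 + (Im z - Im \<zeta>)^2) / 2"
      using le rr by (auto simp: power2_eq_square algebra_simps)
  qed simp
  also have "\<dots> = - ((Re z - Re \<zeta>)^2 + (Im z - Im \<zeta>)^2) / (2 * \<rho>^2)" by simp
  finally show ?thesis using n3 by simp
qed

definition gd :: "(nat \<Rightarrow> complex) \<Rightarrow> nat \<Rightarrow> complex \<Rightarrow> complex" where
  "gd a n z = 1 + (\<Sum>k=2..n. of_nat k * a k * z ^ (k - 1))"

lemma core: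
  fixes z \<zeta> :: complex
  assumes \<zeta>: "norm \<zeta> = \<rho>" and z: "norm z \<le> \<rho>" "z \<noteq> \<zeta>" and \<rho>: "\<rho> > 0"
    and AB: "(\<Sum>k=2..n. real k * norm (a k) * \<rho>^(k-1)) + (\<Sum>k=2..n. real k * (real k - 1) * norm (a k) * \<rho>^(k-1)) < 1"
  shows "gd a n \<zeta> \<noteq> 0" "Re ((partial_sum a n z - partial_sum a n \<zeta>) / (\<zeta> * gd a n \<zeta>)) < 0"
proof -
  define A where "A = (\<Sum>k=2..n. real k * norm (a k) * \<rho>^(k-1))"
  define B where "B = (\<Sum>k=2..n. real k * (real k - 1) * norm (a k) * \<rho>^(k-1))"
  have B0: "B \<ge> 0" unfolding B_def using \<rho> by (intro sum_nonneg) (auto intro!: mult_nonneg_nonneg)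
  have AB1: "A + B < 1" using AB by (simp add: A_def B_def)
  have "norm (gd a n \<zeta> - 1) \<le> A"
    unfolding gd_def A_def using \<zeta>
    by (auto intro!: order_trans[OF norm_sum] sum_mono simp: norm_mult norm_power)
  hence gdA: "norm (gd a n \<zeta>) \<ge> 1 - A"
    using norm_triangle_ineq2[of 1 "gd a n \<zeta>"] by (simp add: norm_minus_commute)
  have gdpos: "norm (gd a n \<zeta>) > 0" using gdA AB1 B0 by linarith
  thus "gd a n \<zeta> \<noteq> 0" by auto
  define d where "d = norm (z - \<zeta>)"
  have dpos: "d > 0" using z by (simp add: d_def)
  define E where "E = partial_sum a n z - partial_sum a n \<zeta> - gd a n \<zeta> * (z - \<zeta>)"
  have Eeq: "E = (\<Sum>k=2..n. a k * (z^k - \<zeta>^k - of_nat k * \<zeta>^(k-1) * (z - \<zeta>)))"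
    unfolding E_def partial_sum_def gd_def
    by (simp add: algebra_simps sum_subtractf sum_distrib_left sum_distrib_right sum.distrib)
  have "norm E \<le> (\<Sum>k=2..n. norm (a k) * (real (k*(k-1)) / 2 * \<rho>^(k-2) * d^2))"
    unfolding Eeq
  proof (rule order_trans[OF norm_sum], rule sum_mono)
    fix k assume "k \<in> {2..n}"
    then obtain m where m: "k = m + 2" by (metis add.commute atLeastAtMost_iff le_Suc_ex)
    have "norm (z^k - \<zeta>^k - of_nat k * \<zeta>^(k-1) * (z - \<zeta>)) \<le> real (k*(k-1)) / 2 * \<rho>^(k-2) * d^2"
      using rem_bound[of z \<rho> \<zeta> m] z \<zeta> unfolding m d_def by (simp add: mult_ac)
    thus "norm (a k * (z^k - \<zeta>^k - of_nat k * \<zeta>^(k-1) * (z - \<zeta>))) \<le> norm (a k) * (real (k*(k-1)) / 2 * \<rho>^(k-2) * d^2)"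
      unfolding norm_mult by (rule mult_left_mono) simp
  qed
  also have "\<dots> = B * d^2 / (2 * \<rho>)"
    unfolding B_def sum_divide_distrib sum_distrib_right
  proof (rule sum.cong)
    fix k assume "k \<in> {2..n}"
    then obtain m where m: "k = m + 2" by (metis add.commute atLeastAtMost_iff le_Suc_ex)
    show "norm (a k) * (real (k*(k-1)) / 2 * \<rho>^(k-2) * d^2) = real k * (real k - 1) * norm (a k) * \<rho>^(k-1) * d^2 / (2 * \<rho>)"
      using \<rho> unfolding m by (simp add: field_simps of_nat_diff)
  qed simp
  finally have Eb: "norm E \<le> B * d^2 / (2 * \<rho>)" .
  define c where "c = \<zeta> * gd a n \<zeta>"
  have nc: "norm c \<ge> \<rho> * (1 - A)" unfolding c_def norm_mult using \<zeta> gdA \<rho> by (simp add: mult_left_mono)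
  have A1: "1 - A > 0" using AB1 B0 by linarith
  have \<zeta>0: "\<zeta> \<noteq> 0" using \<zeta> \<rho> by auto
  have c0: "c \<noteq> 0" using \<zeta>0 gdpos unfolding c_def by auto
  have split: "(partial_sum a n z - partial_sum a n \<zeta>) / c = (z - \<zeta>) / \<zeta> + E / c"
    unfolding E_def c_def using \<zeta>0 gdpos by (simp add: field_simps)
  have "Re (E / c) \<le> norm (E / c)" by (rule complex_Re_le_cmod)
  also have "\<dots> = norm E / norm c" by (simp add: norm_divide)
  also have "\<dots> \<le> (B * d^2 / (2 * \<rho>)) / (\<rho> * (1 - A))"
    by (intro frac_le Eb nc) (use \<rho> A1 B0 in auto)
  finally have ReE: "Re (E / c) \<le> B * d^2 / (2 * \<rho> * \<rho> * (1 - A))" by (simp add: field_simps)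
  have Rez: "Re ((z - \<zeta>) / \<zeta>) \<le> - (d^2) / (2 * \<rho>^2)"
    using re_bound[OF \<zeta> z(1) \<rho>] by (simp add: d_def)
  have "B * d^2 / (2 * \<rho> * \<rho> * (1 - A)) < d^2 / (2 * \<rho>^2)"
  proof -
    have "B / (1 - A) < 1" using AB1 A1 by simp
    hence "B / (1 - A) * (d^2 / (2 * \<rho>^2)) < 1 * (d^2 / (2 * \<rho>^2))"
      by (intro mult_strict_right_mono) (use dpos \<rho> in auto)
    thus ?thesis by (simp add: power2_eq_square field_simps)
  qed
  hence "Re ((partial_sum a n z - partial_sum a n \<zeta>) / c) < 0"
    unfolding split using ReE Rez by simp
  thus "Re ((partial_sum a n z - partial_sum a n \<zeta>) / (\<zeta> * gd a n \<zeta>)) < 0" by (simp add: c_def)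
qed


lemma sums_one:
  fixes r :: real
  assumes r: "0 < r" "r < 1" and eqn: "(1 - r)^2 * ln (1 - r) + 2 - 7 * r + 4 * r^2 = 0"
  shows "(\<lambda>j. (real (j+1) + 2 + 1 / real (j+1)) * r^(j+1) / 2) sums 1"
proof -
  have nr: "norm r < 1" using r by simp
  have s1: "(\<lambda>j. r * (real (Suc j) * r^j)) sums (r * (1 / (1 - r)^2))"
    by (rule sums_mult[OF geometric_deriv_sums[OF nr]])
  have s2: "(\<lambda>j. 2 * (r * r^j)) sums (2 * (r * (1 / (1 - r))))"
    by (rule sums_mult[OF sums_mult[OF geometric_sums[OF nr]]])
  have "(\<lambda>n. - ((- (-r))^n) / of_nat n) sums ln (1 + (-r))"
    by (rule ln_series') (use r in simp)
  hence "(\<lambda>n. - (r^n) / real n) sums ln (1 - r)" by simp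
  hence s3: "(\<lambda>n. - (r^(Suc n)) / real (Suc n)) sums ln (1 - r)"
    using sums_Suc_iff[of "\<lambda>n. - (r^n) / real n" "ln (1 - r)"] by simp
  have "(\<lambda>j. (r * (real (Suc j) * r^j) + 2 * (r * r^j) - (- (r^(Suc j)) / real (Suc j))) / 2)
     sums ((r * (1 / (1 - r)^2) + 2 * (r * (1 / (1 - r))) - ln (1 - r)) / 2)"
    by (intro sums_divide sums_diff sums_add s1 s2 s3)
  moreover have "(r * (1 / (1 - r)^2) + 2 * (r * (1 / (1 - r))) - ln (1 - r)) / 2 = 1"
  proof -
    have r1: "(1 - r) \<noteq> 0" using r by simp
    have D: "(1 - r)^2 > 0" using r1 by simp
    have "(r * (1 / (1 - r)^2) + 2 * (r * (1 / (1 - r))) - ln (1 - r)) * (1 - r)^2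
        = r + 2 * r * (1 - r) - (1 - r)^2 * ln (1 - r)"
    proof -
      have gen: "q \<noteq> 0 \<Longrightarrow> (r * (1 / q^2) + 2 * (r * (1 / q)) - L) * q^2 = r + 2 * r * q - q^2 * L"
        for q L :: real by (simp add: field_simps power2_eq_square)
      show ?thesis by (rule gen[OF r1])
    qed
    also have "\<dots> = 2 * (1 - r)^2"
      using eqn by (simp add: power2_eq_square algebra_simps)
    finally have "r * (1 / (1 - r)^2) + 2 * (r * (1 / (1 - r))) - ln (1 - r) = 2"
      using D by simp
    thus ?thesis by simp
  qed
  moreover have "(\<lambda>j. (r * (real (Suc j) * r^j) + 2 * (r * r^j) - (- (r^(Suc j)) / real (Suc j))) / 2)
     = (\<lambda>j. (real (j+1) + 2 + 1 / real (j+1)) * r^(j+1) / 2)"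
    by (rule ext) (simp add: field_simps)
  ultimately show ?thesis by simp
qed

lemma AB_bound:
  fixes r \<rho> :: real and a :: "nat \<Rightarrow> complex"
  assumes \<rho>: "0 < \<rho>" "\<rho> < r" and r: "r < 1"
    and eqn: "(1 - r)^2 * ln (1 - r) + 2 - 7 * r + 4 * r^2 = 0"
    and n: "n \<ge> 2"
    and cb: "\<And>k. k \<ge> 2 \<Longrightarrow> norm (a k) \<le> 1 / (2 * (real k - 1))"
  shows "(\<Sum>k=2..n. real k * norm (a k) * \<rho>^(k-1)) + (\<Sum>k=2..n. real k * (real k - 1) * norm (a k) * \<rho>^(k-1)) < 1"
proof -
  define h where "h = (\<lambda>x::real. \<lambda>k::nat. real k * real k / (2 * (real k - 1)) * x^(k-1))"
  define u where "u = (\<lambda>j. (real (j+1) + 2 + 1 / real (j+1)) * r^(j+1) / 2)"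
  have su: "u sums 1" unfolding u_def by (rule sums_one) (use \<rho> r eqn in auto)
  have "(\<Sum>k=2..n. real k * norm (a k) * \<rho>^(k-1)) + (\<Sum>k=2..n. real k * (real k - 1) * norm (a k) * \<rho>^(k-1))
      = (\<Sum>k=2..n. real k * real k * norm (a k) * \<rho>^(k-1))"
    by (simp add: sum.distrib[symmetric] algebra_simps)
  also have "\<dots> \<le> (\<Sum>k=2..n. h \<rho> k)"
  proof (rule sum_mono)
    fix k assume k: "k \<in> {2..n}"
    have "norm (a k) \<le> 1 / (2 * (real k - 1))" using k cb by auto
    hence "real k * real k * norm (a k) * \<rho>^(k-1) \<le> real k * real k * (1 / (2 * (real k - 1))) * \<rho>^(k-1)"
      using \<rho> by (intro mult_right_mono mult_left_mono) auto
    thus "real k * real k * norm (a k) * \<rho>^(k-1) \<le> h \<rho> k" by (simp add: h_def)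
  qed
  also have "\<dots> < (\<Sum>k=2..n. h r k)"
  proof (rule sum_strict_mono_ex1)
    show "\<forall>k\<in>{2..n}. h \<rho> k \<le> h r k"
    proof
      fix k assume k: "k \<in> {2..n}"
      have "\<rho>^(k-1) \<le> r^(k-1)" using \<rho> by (intro power_mono) auto
      thus "h \<rho> k \<le> h r k" unfolding h_def using k by (intro mult_left_mono) auto
    qed
    show "\<exists>k\<in>{2..n}. h \<rho> k < h r k"
      using n \<rho> by (intro bexI[of _ 2]) (auto simp: h_def)
  qed simp
  also have "(\<Sum>k=2..n. h r k) = (\<Sum>j=0..n-2. h r (j+2))"
  proof -
    have e: "{2..n} = {0+2..(n-2)+2}" using n by auto
    show ?thesis unfolding e sum.shift_bounds_cl_nat_ivl ..
  qed
  also have "\<dots> = (\<Sum>j=0..n-2. u j)"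
    by (rule sum.cong) (auto simp: h_def u_def field_simps)
  also have "\<dots> \<le> suminf u"
  proof (rule sum_le_suminf)
    show "summable u" using su by (rule sums_summable)
    show "0 \<le> u m" if "m \<in> - {0..n - 2}" for m using \<rho> by (auto simp: u_def)
  qed simp
  also have "suminf u = 1" using su by (rule sums_unique[symmetric])
  finally show ?thesis .
qed


theorem theorem2p1:
  fixes f \<phi> :: "complex \<Rightarrow> complex" and a :: "nat \<Rightarrow> complex" and rK :: real
  assumes f_series: "\<And>z. z \<in> ball 0 1 \<Longrightarrow> (\<lambda>k. a k * z ^ k) sums f z"
    and a0: "a 0 = 0" and a1: "a 1 = 1"
    and f_hol: "f holomorphic_on ball 0 1"
    and phi_hol: "\<phi> holomorphic_on ball 0 1"
    and phi_bd: "\<And>z. z \<in> ball 0 1 \<Longrightarrow> norm (\<phi> z) \<le> 1"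
    and eq: "\<And>z. z \<in> ball 0 1 \<Longrightarrow> z * deriv f z - f z = 1/2 * z^2 * \<phi> z"
    and rK: "0 < rK" "rK < 1" "(1 - rK)^2 * ln (1 - rK) + 2 - 7 * rK + 4 * rK^2 = 0"
    and n: "n \<ge> 2"
  shows "convex_in_disk (partial_sum a n) rK"
proof -
  define g where "g = partial_sum a n"
  have cb: "\<And>k. k \<ge> 2 \<Longrightarrow> norm (a k) \<le> 1 / (2 * (real k - 1))"
    by (rule coef_bound[OF f_series f_hol phi_bd eq]) auto
  have key: "gd a n \<zeta> \<noteq> 0 \<and> Re ((g z - g \<zeta>) / (\<zeta> * gd a n \<zeta>)) < 0"
    if "0 < \<rho>" "\<rho> < rK" "norm \<zeta> = \<rho>" "norm z \<le> \<rho>" "z \<noteq> \<zeta>" for \<rho> z \<zeta>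
  proof -
    have AB: "(\<Sum>k=2..n. real k * norm (a k) * \<rho>^(k-1)) + (\<Sum>k=2..n. real k * (real k - 1) * norm (a k) * \<rho>^(k-1)) < 1"
      by (rule AB_bound[OF that(1,2) rK(2,3) n cb])
    show ?thesis using core[OF that(3,4,5,1) AB] unfolding g_def by blast
  qed
  have hol: "g holomorphic_on UNIV" unfolding g_def partial_sum_def by (intro holomorphic_intros)
  have inj: "inj_on g (ball 0 rK)"
  proof -
    have aux: False if "x \<in> ball 0 rK" "y \<in> ball 0 rK" "g x = g y" "x \<noteq> y" "norm x \<le> norm y" for x y
    proof -
      have y0: "norm y > 0" using that by auto
      have "Re ((g x - g y) / (y * gd a n y)) < 0"
        using key[OF y0 _ refl that(5) that(4)] that(2) by auto
      thus False using that(3) by simp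
    qed
    show ?thesis
    proof (rule inj_onI, rule ccontr)
      fix x y assume "x \<in> ball 0 rK" "y \<in> ball 0 rK" "g x = g y" "x \<noteq> y"
      thus False using aux[of x y] aux[of y x] by (cases "norm x \<le> norm y") auto
    qed
  qed
  have conv: "convex (g ` ball 0 rK)"
    unfolding convex_contains_segment
  proof (intro ballI)
    fix p q assume "p \<in> g ` ball 0 rK" "q \<in> g ` ball 0 rK"
    then obtain z1 z2 where z: "z1 \<in> ball 0 rK" "z2 \<in> ball 0 rK" and pq: "p = g z1" "q = g z2" by auto
    define \<rho> where "\<rho> = (max (norm z1) (norm z2) + rK) / 2"
    have mx: "max (norm z1) (norm z2) < rK" "0 \<le> max (norm z1) (norm z2)"
      "norm z1 \<le> max (norm z1) (norm z2)" "norm z2 \<le> max (norm z1) (norm z2)"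
      using z norm_ge_zero[of z1] by (auto simp: le_max_iff_disj)
    have gen: "0 < (M + R) / 2 \<and> (M + R) / 2 < R \<and> x < (M + R) / 2"
      if "M < R" "0 \<le> M" "x \<le> M" for M R x :: real using that by (auto simp: field_simps)
    have \<rho>1: "0 < \<rho>" "\<rho> < rK" "norm z1 < \<rho>"
      using gen[OF mx(1,2,3)] unfolding \<rho>_def by auto
    have \<rho>4: "norm z2 < \<rho>" using gen[OF mx(1,2,4)] unfolding \<rho>_def by auto
    note \<rho> = \<rho>1 \<rho>4
    define U where "U = g ` ball 0 \<rho>"
    have nc: "\<not> g constant_on ball 0 rK"
    proof
      assume "g constant_on ball 0 rK"
      then obtain c where c: "\<And>x. x \<in> ball 0 rK \<Longrightarrow> g x = c" by (auto simp: constant_on_def)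
      have "0 \<in> ball 0 rK" "complex_of_real (rK/2) \<in> ball 0 rK" using rK by auto
      hence "(0::complex) = complex_of_real (rK/2)" using inj c by (metis inj_on_def)
      thus False using rK by simp
    qed
    have openU: "open U" unfolding U_def
      by (rule open_mapping_thm[OF holomorphic_on_subset[OF hol] _ _ _ _ nc]) (use \<rho> in auto)
    define K where "K = g ` cball 0 \<rho>"
    have "compact K" unfolding K_def
      by (intro compact_continuous_image holomorphic_on_imp_continuous_on
          holomorphic_on_subset[OF hol]) auto
    hence closedK: "closed K" by (rule compact_imp_closed)
    have UK: "U \<subseteq> K" unfolding U_def K_def by auto
    have "closed_segment p q \<subseteq> U"
    proof (rule ccontr)
      assume nsub: "\<not> closed_segment p q \<subseteq> U"
      have "closed_segment p q \<inter> U \<noteq> {}"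
        using \<rho> pq unfolding U_def by (auto intro!: exI[of _ p])
      moreover have "closed_segment p q - U \<noteq> {}" using nsub by auto
      ultimately have "closed_segment p q \<inter> frontier U \<noteq> {}"
        by (intro connected_Int_frontier) auto
      then obtain w where w: "w \<in> closed_segment p q" "w \<in> frontier U" by auto
      have wU: "w \<in> closure U" "w \<notin> U" using w(2) openU by (auto simp: frontier_def interior_open)
      have "closure U \<subseteq> K" by (rule closure_minimal[OF UK closedK])
      hence "w \<in> g ` cball 0 \<rho>" using wU(1) unfolding K_def by blast
      then obtain \<zeta> where \<zeta>c: "\<zeta> \<in> cball 0 \<rho>" and wz: "w = g \<zeta>" by blast
      have "\<zeta> \<notin> ball 0 \<rho>" using wU(2) wz unfolding U_def by blast
      hence n\<zeta>: "norm \<zeta> = \<rho>" using \<zeta>c by simp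
      have \<zeta>: "w = g \<zeta>" "w = g \<zeta>" by (fact wz)+
      obtain t where t: "0 \<le> t" "t \<le> 1" "w = (1 - t) *\<^sub>R p + t *\<^sub>R q"
        using w(1) unfolding closed_segment_def by auto
      have z1ne: "z1 \<noteq> \<zeta>" using \<rho>(3) n\<zeta> by auto
      have z2ne: "z2 \<noteq> \<zeta>" using \<rho>(4) n\<zeta> by auto
      have k1: "gd a n \<zeta> \<noteq> 0 \<and> Re ((g z1 - g \<zeta>) / (\<zeta> * gd a n \<zeta>)) < 0"
        using key[OF \<rho>(1,2) n\<zeta> less_imp_le[OF \<rho>(3)] z1ne] .
      have k2: "Re ((g z2 - g \<zeta>) / (\<zeta> * gd a n \<zeta>)) < 0"
        using key[OF \<rho>(1,2) n\<zeta> less_imp_le[OF \<rho>(4)] z2ne] by blast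
      define c where "c = \<zeta> * gd a n \<zeta>"
      define q1 where "q1 = (g z1 - g \<zeta>) / c"
      define q2 where "q2 = (g z2 - g \<zeta>) / c"
      have "of_real (1 - t) * q1 + of_real t * q2 = ((1 - t) *\<^sub>R p + t *\<^sub>R q - g \<zeta>) / c"
        unfolding q1_def q2_def pq scaleR_conv_of_real by (simp add: field_simps diff_divide_distrib add_divide_distrib)
      also have "\<dots> = 0" using t \<zeta> by simp
      finally have "Re (of_real (1 - t) * q1 + of_real t * q2) = 0" by simp
      hence sum0: "(1 - t) * Re q1 + t * Re q2 = 0" by simp
      have r1: "Re q1 < 0" "Re q2 < 0" using k1 k2 by (auto simp: q1_def q2_def c_def)
      show False
      proof (cases "t = 0")
        case True thus False using sum0 r1 by simp
      next
        case False
        hence "t * Re q2 < 0" using t r1 by (simp add: mult_pos_neg)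
        moreover have "(1 - t) * Re q1 \<le> 0" using t r1 by (simp add: mult_nonneg_nonpos)
        ultimately show False using sum0 by linarith
      qed
    qed
    moreover have "U \<subseteq> g ` ball 0 rK" unfolding U_def using \<rho> by (intro image_mono) auto
    ultimately show "closed_segment p q \<subseteq> g ` ball 0 rK" by blast
  qed
  show ?thesis unfolding convex_in_disk_def g_def[symmetric]
    using holomorphic_on_subset[OF hol] inj conv by auto
qed

end
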